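(* Assume conditions (G) and (B) hold and let $\alpha\in(0,1)$ satisfy $r_n<\alpha$ and $\alpha+2r_n<1$. Let $r_n'=2r_n+\delta_n$. Then with probability at least $1-\alpha-r_n'$, $$V(\pi)\ge LV_{1-\alpha}(\pi):=\widehat V(\pi)-\widehat q_{1-\alpha,\Pi}\,\widehat s(\pi)\quad\text{for all }\pi\in\Pi;$$ equivalently, $\max_{\pi\in\Pi}\widehat Z_\pi\le\widehat q_{1-\alpha,\Pi}$ with probability at least $1-\alpha-r_n'$.
   Context: Setting. $\Pi$ is a finite nonempty set of policies. $V:\Pi\to\mathbb R$ is a deterministic welfare function; on a probability space (the data), $(\widehat V(\pi))_{\pi\in\Pi}$ are real random variables and $(\widehat s(\pi))_{\pi\in\Pi}$ strictly positive random variables. $\widehat Z_\pi=(\widehat V(\pi)-V(\pi))/\widehat s(\pi)$. $(Z_\pi)_{\pi\in\Pi}$ is a centered Gaussian vector with $\mathrm{Var}(Z_\pi)=1$ for all $\pi$. $\mathcal A$ is the collection of rectangles in $\mathbb R^\Pi$ (products of possibly unbounded intervals). Condition (G): there is $r_n\ge0$ with $|\Pr((\widehat Z_\pi)_\pi\in A)-\Pr((Z_\pi)_\pi\in A)|\le r_n$ for all $A\in\mathcal A$. Bootstrap: $\widehat C$ is a data-dependent positive semidefinite $|\Pi|\times|\Pi|$ matrix; conditionally on the data, $(\widehat Z^*_\pi)_{\pi\in\Pi}\sim N(0,\widehat C)$, and $\Pr^*$ denotes this conditional probability given the data. Condition (B): there is $\delta_n\in[0,1]$ such that, with probability at least $1-\delta_n$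 over the data, $|\Pr^*((\widehat Z^*_\pi)_\pi\in A)-\Pr((Z_\pi)_\pi\in A)|\le r_n$ for all $A\in\mathcal A$. Quantiles: for $\tau\in(0,1)$ the $\tau$-quantile of $X$ under $P$ is $\inf\{x:P(X\le x)\ge\tau\}$. $\widehat q_{\tau,\Pi}$ is the $\tau$-quantile of $\max_{\pi\in\Pi}\widehat Z^*_\pi$ under $\Pr^*$. *)

theory Defs
  imports "HOL-Probability.Probability"
begin

definition centered_normal_law :: "real \<Rightarrow> real measure" where
  "centered_normal_law v =
     (if v > 0 then density lborel (normal_density 0 (sqrt v)) else return borel 0)"

text \<open>mu is the law N(0,C) of a centered Gaussian vector indexed by P, as a measure on
  the product space R^P (extensional functions on P); characterised by Cramer-Wold:
  every linear combination is centered normal with variance t'Ct.\<close>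
definition gaussian_law :: "'p set \<Rightarrow> ('p \<Rightarrow> 'p \<Rightarrow> real) \<Rightarrow> ('p \<Rightarrow> real) measure \<Rightarrow> bool" where
  "gaussian_law P C mu \<longleftrightarrow>
     sets mu = sets (PiM P (\<lambda>_. borel)) \<and> prob_space mu \<and>
     (\<forall>t. distr mu borel (\<lambda>x. \<Sum>\<pi>\<in>P. t \<pi> * x \<pi>)
            = centered_normal_law (\<Sum>\<pi>\<in>P. \<Sum>\<rho>\<in>P. t \<pi> * C \<pi> \<rho> * t \<rho>))"

definition psd_matrix :: "'p set \<Rightarrow> ('p \<Rightarrow> 'p \<Rightarrow> real) \<Rightarrow> bool" where
  "psd_matrix P C \<longleftrightarrow> (\<forall>\<pi>\<in>P. \<forall>\<rho>\<in>P. C \<pi> \<rho> = C \<rho> \<pi>) \<and>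
     (\<forall>t. (\<Sum>\<pi>\<in>P. \<Sum>\<rho>\<in>P. t \<pi> * C \<pi> \<rho> * t \<rho>) \<ge> 0)"

definition quantile :: "'b measure \<Rightarrow> ('b \<Rightarrow> real) \<Rightarrow> real \<Rightarrow> real" where
  "quantile Q X tau = Inf {x. measure Q {y \<in> space Q. X y \<le> x} \<ge> tau}"

end

theory Submission
  imports Defs "HOL-Analysis.Analysis"
begin

theorem proposition2:
  fixes M :: "'a measure" and Pi :: "'p set"
    and V :: "'p \<Rightarrow> real" and Vhat shat :: "'a \<Rightarrow> 'p \<Rightarrow> real"
    and CZ :: "'p \<Rightarrow> 'p \<Rightarrow> real" and muZ :: "('p \<Rightarrow> real) measure"
    and Chat :: "'a \<Rightarrow> 'p \<Rightarrow> 'p \<Rightarrow> real" and Pstar :: "'a \<Rightarrow> ('p \<Rightarrow> real) measure"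
    and r \<delta> \<alpha> :: real
  assumes M: "prob_space M"
    and Pi: "finite Pi" "Pi \<noteq> {}"
    and Vhat_meas: "\<And>\<pi>. \<pi> \<in> Pi \<Longrightarrow> (\<lambda>\<omega>. Vhat \<omega> \<pi>) \<in> borel_measurable M"
    and shat_meas: "\<And>\<pi>. \<pi> \<in> Pi \<Longrightarrow> (\<lambda>\<omega>. shat \<omega> \<pi>) \<in> borel_measurable M"
    and shat_pos: "\<And>\<omega> \<pi>. \<omega> \<in> space M \<Longrightarrow> \<pi> \<in> Pi \<Longrightarrow> shat \<omega> \<pi> > 0"
    and Z: "gaussian_law Pi CZ muZ" "\<And>\<pi>. \<pi> \<in> Pi \<Longrightarrow> CZ \<pi> \<pi> = 1"
    and Chat: "\<And>\<omega>. \<omega> \<in> space M \<Longrightarrow> psd_matrix Pi (Chat \<omega>)"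
    and Pstar: "\<And>\<omega>. \<omega> \<in> space M \<Longrightarrow> gaussian_law Pi (Chat \<omega>) (Pstar \<omega>)"
    and r: "r \<ge> 0"
    and G: "\<And>I. (\<forall>\<pi>\<in>Pi. is_interval (I \<pi>)) \<Longrightarrow>
              \<bar>measure M {\<omega> \<in> space M. \<forall>\<pi>\<in>Pi. (Vhat \<omega> \<pi> - V \<pi>) / shat \<omega> \<pi> \<in> I \<pi>}
                 - measure muZ (PiE Pi I)\<bar> \<le> r"
    and \<delta>: "0 \<le> \<delta>" "\<delta> \<le> 1"
    and B: "\<exists>E \<in> sets M. measure M E \<ge> 1 - \<delta> \<and>
              (\<forall>\<omega>\<in>E. \<forall>I. (\<forall>\<pi>\<in>Pi. is_interval (I \<pi>)) \<longrightarrow>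
                 \<bar>measure (Pstar \<omega>) (PiE Pi I) - measure muZ (PiE Pi I)\<bar> \<le> r)"
    and \<alpha>: "0 < \<alpha>" "\<alpha> < 1" "r < \<alpha>" "\<alpha> + 2 * r < 1"
  shows "\<exists>E \<in> sets M. measure M E \<ge> 1 - \<alpha> - (2 * r + \<delta>) \<and>
           (\<forall>\<omega>\<in>E. \<forall>\<pi>\<in>Pi.
              V \<pi> \<ge> Vhat \<omega> \<pi>
                     - quantile (Pstar \<omega>) (\<lambda>z. Max (z ` Pi)) (1 - \<alpha>) * shat \<omega> \<pi>)"
proof -
  interpret pM: prob_space M by (rule M)
  have muZp: "prob_space muZ" and muZs: "sets muZ = sets (PiM Pi (\<lambda>_. borel))"
    using Z(1) unfolding gaussian_law_def by auto
  interpret pZ: prob_space muZ by (rule muZp)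
  define R where "R x = PiE Pi (\<lambda>_::'p. {..x::real})" for x
  define F where "F x = measure muZ (R x)" for x
  have Rsets: "R x \<in> sets muZ" for x
    unfolding R_def muZs using Pi(1) by (intro sets_PiM_I_finite) auto
  have spZ: "space muZ = PiE Pi (\<lambda>_. UNIV)"
    using sets_eq_imp_space_eq[OF muZs] by (simp add: space_PiM)
  have Rmono: "R x \<subseteq> R y" if "x \<le> y" for x y
    using that by (force simp: R_def)
  have Fmono: "F x \<le> F y" if "x \<le> y" for x y
    unfolding F_def using that Rsets by (intro pZ.finite_measure_mono) (auto simp: R_def PiE_def Pi_def)
  define c where "c = 1 - \<alpha> - r"
  have c: "0 < c" "c < 1" using \<alpha> r by (auto simp: c_def)
  define S0 where "S0 = {x. F x \<ge> c}"
  have "(\<lambda>n. F (real n)) \<longlonglongrightarrow> measure muZ (\<Union>n. R (real n))"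
    unfolding F_def using Rsets
    by (intro pZ.finite_Lim_measure_incseq) (auto simp: incseq_def R_def PiE_def Pi_def)
  moreover have "(\<Union>n. R (real n)) = space muZ"
  proof -
    have "y \<in> (\<Union>n. R (real n))" if "y \<in> PiE Pi (\<lambda>_. UNIV)" for y
    proof -
      obtain n where n: "Max ((\<lambda>p. y p) ` Pi) \<le> real n" using real_arch_simple by blast
      have "y p \<le> real n" if "p \<in> Pi" for p
        using n Max_ge[of "(\<lambda>p. y p) ` Pi" "y p"] Pi that by force
      thus ?thesis using \<open>y \<in> _\<close> by (auto simp: R_def PiE_def Pi_def)
    qed
    thus ?thesis unfolding spZ by (auto simp: R_def PiE_def Pi_def)
  qed
  ultimately have Ftop: "(\<lambda>n. F (real n)) \<longlonglongrightarrow> 1" by (simp add: pZ.prob_space)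
  have "(\<lambda>n. F (- real n)) \<longlonglongrightarrow> measure muZ (\<Inter>n. R (- real n))"
    unfolding F_def using Rsets
    by (intro pZ.finite_Lim_measure_decseq) (auto simp: decseq_def R_def PiE_def Pi_def)
  moreover have "(\<Inter>n. R (- real n)) = {}"
  proof (rule ccontr)
    assume "(\<Inter>n. R (- real n)) \<noteq> {}"
    then obtain y where y: "\<And>n. y \<in> R (- real n)" by blast
    obtain p where p: "p \<in> Pi" using Pi by blast
    obtain n where n: "- y p \<le> real n" using real_arch_simple by blast
    have "y p \<le> - real (Suc n)" using y[of "Suc n"] p by (auto simp: R_def)
    with n show False by simp
  qed
  ultimately have Fbot: "(\<lambda>n. F (- real n)) \<longlonglongrightarrow> 0" by simp
  have lt1: "1 - \<alpha> + r < 1" using \<alpha> by simp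
  obtain N1 where N1: "F (real N1) > 1 - \<alpha> + r"
    using order_tendstoD(1)[OF Ftop lt1] unfolding eventually_sequentially by blast
  obtain N2 where N2: "F (- real N2) < c"
    using order_tendstoD(2)[OF Fbot c(1)] unfolding eventually_sequentially by blast
  have "real N1 \<in> S0" using N1 \<alpha> r unfolding S0_def c_def by simp
  hence S0ne: "S0 \<noteq> {}" by blast
  have S0bdd: "bdd_below S0"
  proof
    fix x assume "x \<in> S0"
    hence "F x \<ge> c" by (simp add: S0_def)
    show "- real N2 \<le> x"
    proof (rule ccontr)
      assume "\<not> - real N2 \<le> x"
      hence "F x \<le> F (- real N2)" by (intro Fmono) simp
      with N2 \<open>F x \<ge> c\<close> show False by simp
    qed
  qed
  define q0 where "q0 = Inf S0"
  have "(\<lambda>n. F (q0 + 1 / real (Suc n))) \<longlonglongrightarrow> measure muZ (\<Inter>n. R (q0 + 1 / real (Suc n)))"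
    unfolding F_def using Rsets
  proof (intro pZ.finite_Lim_measure_decseq)
    show "range (\<lambda>n. R (q0 + 1 / real (Suc n))) \<subseteq> pZ.events" using Rsets by auto
    show "decseq (\<lambda>n. R (q0 + 1 / real (Suc n)))" unfolding decseq_def
    proof (intro allI impI)
      fix m n :: nat assume "m \<le> n"
      hence "1 / real (Suc n) \<le> 1 / real (Suc m)" by (intro divide_left_mono) auto
      thus "R (q0 + 1 / real (Suc n)) \<subseteq> R (q0 + 1 / real (Suc m))"
        by (intro Rmono) simp
    qed
  qed
  moreover have "(\<Inter>n. R (q0 + 1 / real (Suc n))) = R q0"
  proof
    show "R q0 \<subseteq> (\<Inter>n. R (q0 + 1 / real (Suc n)))"
    proof (intro subsetI InterI, clarify)
      fix y n assume "y \<in> R q0"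
      moreover have "R q0 \<subseteq> R (q0 + 1 / real (Suc n))" by (intro Rmono) simp
      ultimately show "y \<in> R (q0 + 1 / real (Suc n))" by blast
    qed
    show "(\<Inter>n. R (q0 + 1 / real (Suc n))) \<subseteq> R q0"
    proof
      fix y assume y: "y \<in> (\<Inter>n. R (q0 + 1 / real (Suc n)))"
      have "y p \<le> q0" if p: "p \<in> Pi" for p
      proof (rule field_le_epsilon)
        fix e :: real assume "0 < e"
        then obtain n where n: "1 / real (Suc n) < e" using nat_approx_posE by blast
        have "y p \<le> q0 + 1 / real (Suc n)" using y p by (auto simp: R_def)
        with n show "y p \<le> q0 + e" by simp
      qed
      moreover have "y \<in> extensional Pi" using y by (auto simp: R_def PiE_def)
      ultimately show "y \<in> R q0" by (auto simp: R_def PiE_def Pi_def)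
    qed
  qed
  ultimately have Frc: "(\<lambda>n. F (q0 + 1 / real (Suc n))) \<longlonglongrightarrow> F q0" by (simp add: F_def)
  have "c \<le> F (q0 + 1 / real (Suc n))" for n
  proof -
    have "Inf S0 < q0 + 1 / real (Suc n)" unfolding q0_def by simp
    then obtain x where x: "x \<in> S0" "x < q0 + 1 / real (Suc n)" using cInf_lessD[OF S0ne] by blast
    hence "F x \<le> F (q0 + 1 / real (Suc n))" by (intro Fmono) simp
    with x show ?thesis by (simp add: S0_def)
  qed
  hence Fq0: "c \<le> F q0" by (intro LIMSEQ_le_const[OF Frc]) auto
  define A where "A = {\<omega> \<in> space M. \<forall>\<pi>\<in>Pi. (Vhat \<omega> \<pi> - V \<pi>) / shat \<omega> \<pi> \<in> {..q0}}"
  have Asets: "A \<in> sets M"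
    unfolding A_def
  proof (rule sets.sets_Collect_finite_All[OF _ Pi(1)])
    fix \<pi> assume "\<pi> \<in> Pi"
    hence "(\<lambda>\<omega>. (Vhat \<omega> \<pi> - V \<pi>) / shat \<omega> \<pi>) \<in> borel_measurable M"
      using Vhat_meas shat_meas by measurable
    thus "{\<omega> \<in> space M. (Vhat \<omega> \<pi> - V \<pi>) / shat \<omega> \<pi> \<in> {..q0}} \<in> sets M"
      by measurable
  qed
  have "\<bar>measure M A - F q0\<bar> \<le> r"
    unfolding A_def F_def R_def by (rule G) (auto simp: is_interval_ic)
  hence PA: "measure M A \<ge> c - r" using Fq0 by linarith
  obtain EB where EB: "EB \<in> sets M" "measure M EB \<ge> 1 - \<delta>"
    "\<And>\<omega> I. \<omega> \<in> EB \<Longrightarrow> (\<forall>\<pi>\<in>Pi. is_interval (I \<pi>)) \<Longrightarrow>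
        \<bar>measure (Pstar \<omega>) (PiE Pi I) - measure muZ (PiE Pi I)\<bar> \<le> r"
    using B by blast
  have qbound: "q0 \<le> quantile (Pstar \<omega>) (\<lambda>z. Max (z ` Pi)) (1 - \<alpha>)" if \<omega>: "\<omega> \<in> EB" for \<omega>
  proof -
    have \<omega>M: "\<omega> \<in> space M" using \<omega> EB(1) sets.sets_into_space by blast
    have sP: "sets (Pstar \<omega>) = sets (PiM Pi (\<lambda>_. borel))"
      using Pstar[OF \<omega>M] unfolding gaussian_law_def by auto
    have spP: "space (Pstar \<omega>) = PiE Pi (\<lambda>_. UNIV)"
      using sets_eq_imp_space_eq[OF sP] by (simp add: space_PiM)
    have set_eq: "{y \<in> space (Pstar \<omega>). Max (y ` Pi) \<le> x} = R x" for x
      unfolding spP R_def using Pi by (auto simp: PiE_def Pi_def)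
    have close: "\<bar>measure (Pstar \<omega>) (R x) - F x\<bar> \<le> r" for x
      unfolding F_def R_def by (rule EB(3)[OF \<omega>]) (auto simp: is_interval_ic)
    define S where "S = {x. measure (Pstar \<omega>) {y \<in> space (Pstar \<omega>). Max (y ` Pi) \<le> x} \<ge> 1 - \<alpha>}"
    have S: "S = {x. measure (Pstar \<omega>) (R x) \<ge> 1 - \<alpha>}" unfolding S_def set_eq ..
    have "real N1 \<in> S" using close[of "real N1"] N1 unfolding S by auto
    hence Sne: "S \<noteq> {}" by blast
    have "S \<subseteq> S0"
    proof
      fix x assume "x \<in> S"
      thus "x \<in> S0" using close[of x] unfolding S S0_def c_def by auto
    qed
    hence "Inf S0 \<le> Inf S" by (rule cInf_superset_mono[OF Sne S0bdd])
    thus ?thesis unfolding quantile_def q0_def S_def .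
  qed
  define E where "E = A \<inter> EB"
  have Esets: "E \<in> sets M" using Asets EB(1) by (simp add: E_def)
  have "measure M A + measure M EB \<le> 1 + measure M E"
  proof -
    have "measure M (A \<union> EB) \<le> 1" by (rule pM.prob_le_1)
    moreover have "measure M (A \<union> EB) = measure M A + measure M (EB - A)"
      by (rule pM.finite_measure_Union'[OF Asets EB(1)])
    moreover have "measure M (EB - A) = measure M EB - measure M (A \<inter> EB)"
      using pM.finite_measure_Diff'[OF EB(1) Asets] by (simp add: Int_commute)
    ultimately show ?thesis unfolding E_def by linarith
  qed
  hence PE: "measure M E \<ge> 1 - \<alpha> - (2 * r + \<delta>)" using PA EB(2) unfolding c_def by linarith
  have "\<forall>\<omega>\<in>E. \<forall>\<pi>\<in>Pi. V \<pi> \<ge> Vhat \<omega> \<pi>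
                     - quantile (Pstar \<omega>) (\<lambda>z. Max (z ` Pi)) (1 - \<alpha>) * shat \<omega> \<pi>"
  proof (intro ballI)
    fix \<omega> \<pi> assume \<omega>: "\<omega> \<in> E" and \<pi>: "\<pi> \<in> Pi"
    have \<omega>M: "\<omega> \<in> space M" and \<omega>A: "\<omega> \<in> A" and \<omega>B: "\<omega> \<in> EB" using \<omega> by (auto simp: E_def A_def)
    have pos: "shat \<omega> \<pi> > 0" by (rule shat_pos[OF \<omega>M \<pi>])
    have "(Vhat \<omega> \<pi> - V \<pi>) / shat \<omega> \<pi> \<le> quantile (Pstar \<omega>) (\<lambda>z. Max (z ` Pi)) (1 - \<alpha>)"
      using \<omega>A \<pi> qbound[OF \<omega>B] by (auto simp: A_def)
    thus "V \<pi> \<ge> Vhat \<omega> \<pi> - quantile (Pstar \<omega>) (\<lambda>z. Max (z ` Pi)) (1 - \<alpha>) * shat \<omega> \<pi>"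
      using pos by (simp add: divide_le_eq algebra_simps)
  qed
  with Esets PE show ?thesis by blast
qed

end
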